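(* Let $p, q \in \mathbb{R}$ with $q \le p$. Then $$\mathscr{E}_p(v) - \mathscr{E}_q(v) \le \frac{p-q}{8} (\max v - \min v)^2$$ for every $n \in \mathbb{N}$ and every $v \in \mathbb{R}^n$. Moreover, the constant $\frac{p-q}{8}$ is sharp: if $C \in \mathbb{R}$ is such that $\mathscr{E}_p(v) - \mathscr{E}_q(v) \le C(\max v - \min v)^2$ for all $n\in\mathbb{N}$ and all $v \in \mathbb{R}^n$, then $C \ge \frac{p-q}{8}$.
   Context: For $v = (v_1,\dots,v_n) \in \mathbb{R}^n$, the exponential mean of order $p \in \mathbb{R}$ is $\mathscr{E}_p(v) = \frac{1}{p}\ln\big(\frac{e^{p v_1} + \cdots + e^{p v_n}}{n}\big)$ for $p \neq 0$ and $\mathscr{E}_0(v) = \frac{v_1 + \cdots + v_n}{n}$. Here $\max v$ and $\min v$ denote the largest and smallest entry of $v$. *)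

theory Defs
  imports Complex_Main
begin

definition expmean :: "real \<Rightarrow> nat \<Rightarrow> (nat \<Rightarrow> real) \<Rightarrow> real" where
  "expmean p n v =
     (if p = 0 then (\<Sum>i<n. v i) / real n
      else ln ((\<Sum>i<n. exp (p * v i)) / real n) / p)"

end

theory Submission
  imports Defs "HOL-Probability.Hoeffding"
begin

lemma exp_chord:
  fixes a b x l :: real
  assumes "a < b" "a \<le> x" "x \<le> b"
  shows "exp (l * x) \<le> ((b - x) * exp (l * a) + (x - a) * exp (l * b)) / (b - a)"
proof -
  define y where "y = (x - a) / (b - a)"
  have y: "0 \<le> y" "y \<le> 1" using assms by (auto simp: y_def field_simps)
  have "exp ((1 - y) *\<^sub>R (l * a) + y *\<^sub>R (l * b)) \<le> (1 - y) * exp (l * a) + y * exp (l * b)"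
    using y by (intro convex_onD[OF exp_convex]) auto
  also have "(1 - y) *\<^sub>R (l * a) + y *\<^sub>R (l * b) = l * a + l * (y * (b - a))"
    by (simp add: algebra_simps)
  also have "y * (b - a) = x - a" using assms by (simp add: y_def)
  also have "l * a + l * (x - a) = l * x" by (simp add: algebra_simps)
  also have "(1 - y) * exp (l * a) + y * exp (l * b)
      = ((b - x) * exp (l * a) + (x - a) * exp (l * b)) / (b - a)"
  proof -
    have ne: "b - a \<noteq> 0" using assms by simp
    have "(b - x) / (b - a) = ((b - a) - (x - a)) / (b - a)" by simp
    also have "\<dots> = (b - a) / (b - a) - (x - a) / (b - a)" by (rule diff_divide_distrib)
    also have "(b - a) / (b - a) = 1" using ne by simp
    finally have "1 - y = (b - x) / (b - a)" by (simp add: y_def)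
    thus ?thesis by (simp add: y_def add_divide_distrib)
  qed
  finally show ?thesis .
qed

lemma hoeff_aux2:
  fixes p h :: real
  assumes "0 \<le> p" "p \<le> 1"
  shows "ln (1 + p * (exp h - 1)) \<le> p * h + h^2 / 8"
proof (cases "h \<ge> 0")
  case True
  from Hoeffdings_lemma_aux[OF True assms(1)] show ?thesis by (simp add: algebra_simps)
next
  case False
  define h' where "h' = - h"
  define p' where "p' = 1 - p"
  have h': "h' \<ge> 0" using False by (simp add: h'_def)
  have p': "p' \<ge> 0" using assms by (simp add: p'_def)
  have pos: "1 + p' * (exp h' - 1) > 0"
    using h' p' by (intro add_pos_nonneg mult_nonneg_nonneg) auto
  have eq: "1 + p * (exp h - 1) = exp h * (1 + p' * (exp h' - 1))"
    by (simp add: p'_def h'_def exp_minus field_simps)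
  have "ln (1 + p * (exp h - 1)) = h + ln (1 + p' * (exp h' - 1))"
    using pos by (simp add: eq ln_mult)
  also have "ln (1 + p' * (exp h' - 1)) \<le> p' * h' + h'^2/8"
    using Hoeffdings_lemma_aux[OF h' p'] by (simp add: algebra_simps)
  finally show ?thesis by (simp add: p'_def h'_def algebra_simps power2_eq_square)
qed

lemma weighted_hoeffding:
  fixes w x :: "'i \<Rightarrow> real" and a b l :: real
  assumes fin: "finite I" and w0: "\<And>i. i \<in> I \<Longrightarrow> w i \<ge> 0" and w1: "sum w I = 1"
    and ab: "\<And>i. i \<in> I \<Longrightarrow> a \<le> x i \<and> x i \<le> b"
  shows "ln (\<Sum>i\<in>I. w i * exp (l * x i)) \<le> l * (\<Sum>i\<in>I. w i * x i) + l^2 * (b - a)^2 / 8"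
proof -
  define \<mu> where "\<mu> = (\<Sum>i\<in>I. w i * x i)"
  have "I \<noteq> {}" using w1 by auto
  then obtain i0 where "i0 \<in> I" by auto
  have "\<exists>i\<in>I. w i > 0"
  proof (rule ccontr)
    assume "\<not> ?thesis"
    hence "\<And>i. i \<in> I \<Longrightarrow> w i = 0" using w0 by force
    hence "sum w I = 0" by simp
    with w1 show False by simp
  qed
  then obtain j where j: "j \<in> I" "w j > 0" by auto
  have Spos: "(\<Sum>i\<in>I. w i * exp (l * x i)) > 0"
    by (rule sum_pos2[OF fin j(1)]) (use j w0 in auto)
  have mu_lo: "a \<le> \<mu>"
  proof -
    have "(\<Sum>i\<in>I. w i * a) \<le> \<mu>" unfolding \<mu>_def
      by (intro sum_mono mult_left_mono) (use ab w0 in auto)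
    thus ?thesis by (simp add: sum_distrib_right[symmetric] w1)
  qed
  have mu_hi: "\<mu> \<le> b"
  proof -
    have "\<mu> \<le> (\<Sum>i\<in>I. w i * b)" unfolding \<mu>_def
      by (intro sum_mono mult_left_mono) (use ab w0 in auto)
    thus ?thesis by (simp add: sum_distrib_right[symmetric] w1)
  qed
  show ?thesis
  proof (cases "a < b")
    case False
    hence "a = b" using mu_lo mu_hi by simp
    hence xi: "\<And>i. i \<in> I \<Longrightarrow> x i = a" using ab by force
    have "(\<Sum>i\<in>I. w i * exp (l * x i)) = exp (l * a)"
      using xi by (simp add: sum_distrib_right[symmetric] w1)
    moreover have "\<mu> = a"
      using xi by (simp add: \<mu>_def sum_distrib_right[symmetric] w1)
    ultimately show ?thesis using \<open>a = b\<close> by (simp add: \<mu>_def)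
  next
    case True
    have "(\<Sum>i\<in>I. w i * exp (l * x i))
        \<le> (\<Sum>i\<in>I. w i * (((b - x i) * exp (l * a) + (x i - a) * exp (l * b)) / (b - a)))"
      by (intro sum_mono mult_left_mono exp_chord) (use ab w0 True in auto)
    also have "\<dots> = ((b - \<mu>) * exp (l * a) + (\<mu> - a) * exp (l * b)) / (b - a)"
    proof -
      have "(\<Sum>i\<in>I. w i * (((b - x i) * exp (l * a) + (x i - a) * exp (l * b)) / (b - a)))
          = (\<Sum>i\<in>I. (w i * (b * exp (l * a) - a * exp (l * b)) + (w i * x i) * (exp (l * b) - exp (l * a))) / (b - a))"
        by (intro sum.cong refl) (simp add: field_simps)
      also have "\<dots> = ((\<Sum>i\<in>I. w i) * (b * exp (l * a) - a * exp (l * b)) + \<mu> * (exp (l * b) - exp (l * a))) / (b - a)"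
        by (simp add: sum_divide_distrib[symmetric] sum.distrib sum_distrib_right \<mu>_def)
      finally show ?thesis using True by (simp add: w1 field_simps)
    qed
    also have "\<dots> = exp (l * a) + ((\<mu> - a) / (b - a)) * (exp (l * b) - exp (l * a))"
      using True by (simp add: field_simps)
    also have "\<dots> = exp (l * a) * (1 + ((\<mu> - a) / (b - a)) * (exp (l * (b - a)) - 1))"
      by (simp add: right_diff_distrib exp_diff field_simps)
    finally have le: "(\<Sum>i\<in>I. w i * exp (l * x i)) \<le> exp (l * a) * (1 + ((\<mu> - a) / (b - a)) * (exp (l * (b - a)) - 1))" .
    define p where "p = (\<mu> - a) / (b - a)"
    have p: "0 \<le> p" "p \<le> 1" using True mu_lo mu_hi by (auto simp: p_def field_simps)
    have pos: "1 + p * (exp (l * (b - a)) - 1) > 0"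
    proof -
      have "1 + p * (exp (l * (b - a)) - 1) = (1 - p) + p * exp (l * (b - a))" by (simp add: algebra_simps)
      also have "\<dots> > 0"
      proof (cases "p = 1")
        case True thus ?thesis by simp
      next
        case False thus ?thesis using p by (intro add_pos_nonneg) auto
      qed
      finally show ?thesis .
    qed
    have "ln (\<Sum>i\<in>I. w i * exp (l * x i)) \<le> ln (exp (l * a) * (1 + p * (exp (l * (b - a)) - 1)))"
      using le Spos pos by (subst ln_le_cancel_iff) (auto simp: p_def)
    also have "\<dots> = l * a + ln (1 + p * (exp (l * (b - a)) - 1))"
      using pos by (simp add: ln_mult)
    also have "\<dots> \<le> l * a + (p * (l * (b - a)) + (l * (b - a))^2 / 8)"
      using hoeff_aux2[OF p] by simp
    also have "\<dots> = l * \<mu> + l^2 * (b - a)^2 / 8"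
      using True by (simp add: p_def field_simps power2_eq_square)
    finally show ?thesis by (simp add: \<mu>_def)
  qed
qed

lemma gstep:
  fixes v :: "nat \<Rightarrow> real" and n :: nat and s l :: real
  assumes n: "n \<ge> 1"
  shows "ln (\<Sum>i<n. exp ((s + l) * v i)) - ln (\<Sum>i<n. exp (s * v i))
     \<le> l * ((\<Sum>i<n. exp (s * v i) * v i) / (\<Sum>i<n. exp (s * v i)))
        + l^2 * (Max (v ` {..<n}) - Min (v ` {..<n}))^2 / 8"
proof -
  define A where "A = (\<Sum>i<n. exp (s * v i))"
  have ne: "{..<n} \<noteq> {}" using n by (simp add: lessThan_empty_iff)
  have Apos: "A > 0" unfolding A_def using ne by (intro sum_pos) auto
  define w where "w i = exp (s * v i) / A" for i
  have w1: "sum w {..<n} = 1" using Apos by (simp add: w_def A_def sum_divide_distrib[symmetric])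
  have ab: "Min (v ` {..<n}) \<le> v i \<and> v i \<le> Max (v ` {..<n})" if "i \<in> {..<n}" for i
    using that by auto
  have H: "ln (\<Sum>i<n. w i * exp (l * v i)) \<le> l * (\<Sum>i<n. w i * v i) + l^2 * (Max (v ` {..<n}) - Min (v ` {..<n}))^2 / 8"
    by (rule weighted_hoeffding[OF finite_lessThan _ w1 ab]) (use Apos in \<open>auto simp: w_def\<close>)
  have e1: "(\<Sum>i<n. w i * exp (l * v i)) = (\<Sum>i<n. exp ((s + l) * v i)) / A"
    by (simp add: w_def sum_divide_distrib distrib_right exp_add)
  have e2: "(\<Sum>i<n. w i * v i) = (\<Sum>i<n. exp (s * v i) * v i) / A"
    by (simp add: w_def sum_divide_distrib)
  have Bpos: "(\<Sum>i<n. exp ((s + l) * v i)) > 0" using ne by (intro sum_pos) auto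
  have "ln ((\<Sum>i<n. exp ((s + l) * v i)) / A) = ln (\<Sum>i<n. exp ((s + l) * v i)) - ln A"
    using Apos Bpos by (simp add: ln_div)
  with H e1 e2 show ?thesis by (simp add: A_def)
qed

lemma part1:
  fixes p q :: real and n :: nat and v :: "nat \<Rightarrow> real"
  assumes pq: "q \<le> p" and n: "n \<ge> 1"
  shows "expmean p n v - expmean q n v \<le> (p - q) / 8 * (Max (v ` {..<n}) - Min (v ` {..<n}))^2"
proof -
  define A where "A t = (\<Sum>i<n. exp (t * v i))" for t
  define G where "G t = ln (A t)" for t
  define mu where "mu s = (\<Sum>i<n. exp (s * v i) * v i) / A s" for s
  define Z where "Z = (Max (v ` {..<n}) - Min (v ` {..<n}))^2 / 8"
  have goal: "(p - q) / 8 * (Max (v ` {..<n}) - Min (v ` {..<n}))^2 = (p - q) * Z"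
    by (simp add: Z_def)
  have Z0: "Z \<ge> 0" by (simp add: Z_def)
  have step: "G (s + l) - G s \<le> l * mu s + l^2 * Z" for s l
    using gstep[OF n, of s l] by (simp add: G_def A_def mu_def Z_def)
  have ne: "{..<n} \<noteq> {}" using n by (simp add: lessThan_empty_iff)
  have Apos: "A t > 0" for t unfolding A_def using ne by (intro sum_pos) auto
  have A0: "A 0 = real n" by (simp add: A_def)
  have E: "expmean t n v = (G t - G 0) / t" if "t \<noteq> 0" for t
  proof -
    have "expmean t n v = ln (A t / A 0) / t" using that by (simp add: expmean_def A0) (simp add: A_def)
    also have "ln (A t / A 0) = G t - G 0" using Apos[of t] Apos[of 0] by (simp add: G_def ln_div)
    finally show ?thesis .
  qed
  have E0: "expmean 0 n v = mu 0" by (simp add: expmean_def mu_def A_def)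
  have mixed: "t * (expmean t n v - mu 0) \<le> t * (t * Z)" for t
  proof (cases "t = 0")
    case True thus ?thesis by simp
  next
    case False
    have "t * (expmean t n v - mu 0) = (G t - G 0) - t * mu 0"
      using False by (simp add: E field_simps)
    also have "\<dots> \<le> t^2 * Z" using step[of 0 t] by simp
    finally show ?thesis by (simp add: power2_eq_square)
  qed
  have key: "expmean p n v - expmean q n v \<le> (p - q) * Z"
    if gen: "q * (G p - G 0) - p * (G q - G 0) \<le> p * q * ((p - q) * Z)" and pq0: "p * q > 0"
  proof -
    have "p \<noteq> 0" "q \<noteq> 0" using pq0 by auto
    hence "expmean p n v - expmean q n v = (q * (G p - G 0) - p * (G q - G 0)) / (p * q)"
      by (simp add: E field_simps)
    also have "\<dots> \<le> p * q * ((p - q) * Z) / (p * q)"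
      using gen pq0 by (intro divide_right_mono) auto
    also have "\<dots> = (p - q) * Z" using \<open>p \<noteq> 0\<close> \<open>q \<noteq> 0\<close> by simp
    finally show ?thesis .
  qed
  have main: "expmean p n v - expmean q n v \<le> (p - q) * Z"
  proof (cases "q \<le> 0 \<and> 0 \<le> p")
    case True
    have hp: "expmean p n v - mu 0 \<le> p * Z"
    proof (cases "p = 0")
      case True thus ?thesis using E0 by simp
    next
      case False
      hence "p > 0" using \<open>q \<le> 0 \<and> 0 \<le> p\<close> by simp
      thus ?thesis using mixed[of p] by (simp add: mult_le_cancel_left_pos)
    qed
    have hq: "mu 0 - expmean q n v \<le> - q * Z"
    proof (cases "q = 0")
      case True thus ?thesis using E0 by simp
    next
      case False
      hence "q < 0" using \<open>q \<le> 0 \<and> 0 \<le> p\<close> by simp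
      have h: "(-q) * (mu 0 - expmean q n v) \<le> (-q) * (- q * Z)"
        using mixed[of q] by (simp add: algebra_simps)
      have pos: "-q > 0" using \<open>q < 0\<close> by simp
      show ?thesis using h pos by (metis mult_le_cancel_left_pos)
    qed
    from hp hq show ?thesis by (simp add: algebra_simps)
  next
    case False
    show ?thesis
    proof (cases "q > 0")
      case True
      have s1: "G p - G q \<le> (p - q) * mu q + (p - q)^2 * Z" using step[of q "p - q"] by simp
      have s2: "G 0 - G q \<le> (- q) * mu q + q^2 * Z" using step[of q "- q"] by simp
      have m1: "q * (G p - G q) \<le> q * ((p - q) * mu q + (p - q)^2 * Z)"
        using s1 True by (intro mult_left_mono) auto
      have m2: "(p - q) * (G 0 - G q) \<le> (p - q) * ((- q) * mu q + q^2 * Z)"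
        using s2 pq by (intro mult_left_mono) auto
      have "q * (G p - G 0) - p * (G q - G 0) = q * (G p - G q) + (p - q) * (G 0 - G q)"
        by (simp add: algebra_simps)
      also have "\<dots> \<le> q * ((p - q) * mu q + (p - q)^2 * Z) + (p - q) * ((- q) * mu q + q^2 * Z)"
        using m1 m2 by linarith
      also have "\<dots> = p * q * ((p - q) * Z)" by (simp add: algebra_simps power2_eq_square)
      finally show ?thesis using True pq by (intro key) auto
    next
      case False
      hence p0: "p < 0" using \<open>\<not> (q \<le> 0 \<and> 0 \<le> p)\<close> by auto
      have s1: "G q - G p \<le> (q - p) * mu p + (q - p)^2 * Z" using step[of p "q - p"] by simp
      have s2: "G 0 - G p \<le> (- p) * mu p + p^2 * Z" using step[of p "- p"] by simp
      have m1: "(- p) * (G q - G p) \<le> (- p) * ((q - p) * mu p + (q - p)^2 * Z)"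
        using s1 p0 by (intro mult_left_mono) auto
      have m2: "(p - q) * (G 0 - G p) \<le> (p - q) * ((- p) * mu p + p^2 * Z)"
        using s2 pq by (intro mult_left_mono) auto
      have "q * (G p - G 0) - p * (G q - G 0) = (- p) * (G q - G p) + (p - q) * (G 0 - G p)"
        by (simp add: algebra_simps)
      also have "\<dots> \<le> (- p) * ((q - p) * mu p + (q - p)^2 * Z) + (p - q) * ((- p) * mu p + p^2 * Z)"
        using m1 m2 by linarith
      also have "\<dots> = p * q * ((p - q) * Z)" by (simp add: algebra_simps power2_eq_square)
      finally show ?thesis using p0 pq by (intro key) (auto intro: mult_neg_neg)
    qed
  qed
  show ?thesis using main by (simp only: goal)
qed

lemma cosh_lower: "2 + y^2 \<le> exp y + exp (- y)" for y :: real
proof -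
  have T: "1 + z + z^2/2 + z^3/6 \<le> exp z" for z :: real
  proof -
    obtain t where t: "exp z = (\<Sum>m<4. z ^ m / fact m) + exp t / fact 4 * z ^ 4"
      using Maclaurin_exp_le[of z 4] by blast
    have "(\<Sum>m<4. z ^ m / fact m) = 1 + z + z^2/2 + z^3/6"
      by (simp add: eval_nat_numeral fact_numeral)
    moreover have "exp t / fact 4 * z ^ 4 \<ge> 0" 
    proof -
      have "z ^ 4 = (z^2)^2" by simp
      hence "z ^ 4 \<ge> 0" by simp
      thus ?thesis by (intro mult_nonneg_nonneg divide_nonneg_nonneg) auto
    qed
    ultimately show ?thesis using t by linarith
  qed
  from T[of y] T[of "-y"] show ?thesis by (simp add: power2_eq_square power3_eq_cube)
qed

lemma B_bounds:
  fixes y :: real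
  shows "y^2 / (2 + y^2) \<le> ln ((exp y + exp (- y)) / 2)"
    and "ln ((exp y + exp (- y)) / 2) \<le> y^2 / 2"
proof -
  define u where "u = (exp y + exp (- y)) / 2"
  have u1: "1 + y^2/2 \<le> u" using cosh_lower[of y] by (simp add: u_def)
  have "y^2 \<ge> 0" by simp
  hence upos: "u > 0" using u1 by linarith
  have "ln (1 / u) \<le> 1 / u - 1" using upos by (intro ln_le_minus_one) auto
  hence "1 - 1 / u \<le> ln u" using upos by (simp add: ln_div)
  moreover have "1 / u \<le> 1 / (1 + y^2/2)"
    by (intro divide_left_mono mult_pos_pos) (use u1 upos \<open>y^2 \<ge> 0\<close> in linarith)+
  moreover have "1 / (1 + y^2/2) = 2 / (2 + y^2)"
    by (simp add: field_simps)
  moreover have "1 - 2 / (2 + y^2) = y^2 / (2 + y^2)"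
  proof -
    have h: "2 + y^2 > 0" using \<open>y^2 \<ge> 0\<close> by linarith
    thus ?thesis by (simp add: field_simps)
  qed
  ultimately show "y^2 / (2 + y^2) \<le> ln ((exp y + exp (- y)) / 2)" unfolding u_def by linarith
next
  have "ln (\<Sum>i\<in>{0::nat,1}. (1/2) * exp (y * (if i = 0 then 1 else -1)))
     \<le> y * (\<Sum>i\<in>{0::nat,1}. (1/2) * (if i = 0 then 1 else -1)) + y^2 * (1 - (-1))^2 / 8"
    by (rule weighted_hoeffding) auto
  thus "ln ((exp y + exp (- y)) / 2) \<le> y^2 / 2" by (simp add: add_divide_distrib)
qed

lemma E_bounds:
  fixes x t :: real
  assumes x: "x > 0"
  defines "vx \<equiv> (\<lambda>i::nat. if i = 0 then x else - x)"
  shows "t * x^2 / 2 - \<bar>t\<bar>^3 * x^4 / 4 \<le> expmean t 2 vx"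
    and "expmean t 2 vx \<le> t * x^2 / 2 + \<bar>t\<bar>^3 * x^4 / 4"
proof -
  define y where "y = t * x"
  define B where "B = ln ((exp y + exp (- y)) / 2)"
  have Bup: "B \<le> y^2 / 2" unfolding B_def by (rule B_bounds(2))
  have Blo: "y^2 / 2 - y^4 / 4 \<le> B"
  proof -
    have h: "2 + y^2 > 0" by (simp add: add_pos_nonneg)
    have "y^2 / 2 - y^4 / 4 \<le> y^2 / (2 + y^2)"
    proof -
      have "y^2 / 2 - y^2 / (2 + y^2) = (y^2 * y^2) / (2 * (2 + y^2))"
        using h by (simp add: field_simps)
      also have "\<dots> \<le> (y^2 * y^2) / (2 * 2)"
        using h by (intro divide_left_mono mult_pos_pos) auto
      also have "\<dots> = y^4 / 4" by (simp add: power4_eq_xxxx power2_eq_square)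
      finally show ?thesis by linarith
    qed
    thus ?thesis using B_bounds(1)[of y] unfolding B_def by linarith
  qed
  have E: "expmean t 2 vx = B / t" if "t \<noteq> 0"
    using that by (simp add: expmean_def vx_def B_def y_def eval_nat_numeral)
  have E0: "expmean 0 2 vx = 0" by (simp add: expmean_def vx_def eval_nat_numeral)
  have "t * x^2 / 2 - \<bar>t\<bar>^3 * x^4 / 4 \<le> expmean t 2 vx \<and> expmean t 2 vx \<le> t * x^2 / 2 + \<bar>t\<bar>^3 * x^4 / 4"
  proof (cases t "0::real" rule: linorder_cases)
    case equal thus ?thesis using E0 by simp
  next
    case greater
    have "(y^2 / 2 - y^4 / 4) / t \<le> B / t" using Blo greater by (intro divide_right_mono) auto
    moreover have "B / t \<le> (y^2 / 2) / t" using Bup greater by (intro divide_right_mono) auto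
    moreover have "(y^2 / 2 - y^4 / 4) / t = t * x^2 / 2 - \<bar>t\<bar>^3 * x^4 / 4"
      using greater by (simp add: y_def field_simps power2_eq_square power3_eq_cube power4_eq_xxxx)
    moreover have "(y^2 / 2) / t = t * x^2 / 2"
      using greater by (simp add: y_def field_simps power2_eq_square)
    moreover have "\<bar>t\<bar>^3 * x^4 / 4 \<ge> 0" by simp
    ultimately show ?thesis using E greater by auto
  next
    case less
    have "B / t \<le> (y^2 / 2 - y^4 / 4) / t" using Blo less by (intro divide_right_mono_neg) auto
    moreover have "(y^2 / 2) / t \<le> B / t" using Bup less by (intro divide_right_mono_neg) auto
    moreover have "(y^2 / 2 - y^4 / 4) / t = t * x^2 / 2 + \<bar>t\<bar>^3 * x^4 / 4"
      using less by (simp add: y_def field_simps power2_eq_square power3_eq_cube power4_eq_xxxx)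
    moreover have "(y^2 / 2) / t = t * x^2 / 2"
      using less by (simp add: y_def field_simps power2_eq_square)
    moreover have "\<bar>t\<bar>^3 * x^4 / 4 \<ge> 0" by simp
    ultimately show ?thesis using E less by auto
  qed
  thus "t * x^2 / 2 - \<bar>t\<bar>^3 * x^4 / 4 \<le> expmean t 2 vx"
    and "expmean t 2 vx \<le> t * x^2 / 2 + \<bar>t\<bar>^3 * x^4 / 4" by auto
qed


theorem mainTheorem5:
  fixes p q :: real
  assumes "q \<le> p"
  shows "(\<forall>(n::nat) (v::nat \<Rightarrow> real). n \<ge> 1 \<longrightarrow>
            expmean p n v - expmean q n v
              \<le> (p - q) / 8 * (Max (v ` {..<n}) - Min (v ` {..<n}))^2)
       \<and> (\<forall>C::real. (\<forall>(n::nat) (v::nat \<Rightarrow> real). n \<ge> 1 \<longrightarrow>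
            expmean p n v - expmean q n v
              \<le> C * (Max (v ` {..<n}) - Min (v ` {..<n}))^2)
            \<longrightarrow> C \<ge> (p - q) / 8)"
proof (intro conjI allI impI)
  fix n :: nat and v :: "nat \<Rightarrow> real"
  assume "n \<ge> 1"
  thus "expmean p n v - expmean q n v \<le> (p - q) / 8 * (Max (v ` {..<n}) - Min (v ` {..<n}))^2"
    using part1[OF assms] by blast
next
  fix C :: real
  assume H: "\<forall>(n::nat) (v::nat \<Rightarrow> real). n \<ge> 1 \<longrightarrow>
            expmean p n v - expmean q n v
              \<le> C * (Max (v ` {..<n}) - Min (v ` {..<n}))^2"
  define K where "K = (\<bar>p\<bar>^3 + \<bar>q\<bar>^3) / 4"
  have K0: "K \<ge> 0" by (simp add: K_def)
  have ineq: "(p - q) / 2 - K * z \<le> 4 * C" if z: "z > 0" for z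
  proof -
    define x where "x = sqrt z"
    have x: "x > 0" using z by (simp add: x_def)
    have x2: "x^2 = z" using z by (simp add: x_def)
    have x4: "x^4 = z^2" using x2 by (metis power_mult numeral_times_numeral semiring_norm(12) semiring_norm(13) mult.commute power2_eq_square)
    define vx where "vx = (\<lambda>i::nat. if i = 0 then x else - x)"
    have img: "vx ` {..<2} = {x, - x}"
    proof -
      have "{..<2::nat} = {0, 1}" by auto
      thus ?thesis by (auto simp: vx_def)
    qed
    have mx: "Max (vx ` {..<2}) = x" using x by (simp add: img)
    have mn: "Min (vx ` {..<2}) = - x" using x by (simp add: img)
    have h: "expmean p 2 vx - expmean q 2 vx \<le> C * (x - - x)^2"
      using H[rule_format, of 2 vx] by (simp add: mx mn)
    have lp: "p * x^2 / 2 - \<bar>p\<bar>^3 * x^4 / 4 \<le> expmean p 2 vx"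
      using E_bounds(1)[OF x, of p] by (simp add: vx_def)
    have lq: "expmean q 2 vx \<le> q * x^2 / 2 + \<bar>q\<bar>^3 * x^4 / 4"
      using E_bounds(2)[OF x, of q] by (simp add: vx_def)
    have "(x - - x)^2 = 4 * z" using x2 by (simp add: power2_eq_square algebra_simps)
    hence "(p - q) * z / 2 - K * z^2 \<le> 4 * C * z"
      using h lp lq x2 x4 by (simp add: K_def algebra_simps add_divide_distrib diff_divide_distrib)
    hence "z * ((p - q) / 2 - K * z) \<le> z * (4 * C)"
      by (simp add: algebra_simps power2_eq_square)
    thus ?thesis using z by (simp add: mult_le_cancel_left_pos)
  qed
  show "C \<ge> (p - q) / 8"
  proof (rule ccontr)
    assume "\<not> C \<ge> (p - q) / 8"
    define d where "d = (p - q) / 2 - 4 * C"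
    have d: "d > 0" using \<open>\<not> C \<ge> (p - q) / 8\<close> by (simp add: d_def)
    define z where "z = d / (2 * (K + 1))"
    have z: "z > 0" using d K0 by (simp add: z_def)
    have "K * z \<le> d / 2"
    proof -
      have "K * z = (K / (K + 1)) * (d / 2)" using K0 by (simp add: z_def field_simps)
      also have "\<dots> \<le> 1 * (d / 2)" using K0 d by (intro mult_right_mono) auto
      finally show ?thesis by simp
    qed
    with ineq[OF z] d show False unfolding d_def by (simp add: field_simps)
  qed
qed

end
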